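(* Let $G$ be a $\lambda$-graph, $B$ a bisimulation on the nodes of $G$, and $Q$ a query over $G$ with $Q\subseteq B$. Then $Q^{\Downarrow}$ is a bisimulation.
   Context: A pre-$\lambda$-graph is a directed graph whose nodes are of four kinds: an application node $@(n_1,n_2)$ has exactly two children, its left child $n_1$ and its right child $n_2$; an abstraction node $\lambda(n)$ has exactly one child, its body $n$; a free variable node has no children and carries an atom $\mathrm{id}(n)$ from a fixed set of atoms, distinct free variable nodes carrying distinct atoms; a bound variable node $\mathrm{var}(l)$ has exactly one outgoing binding edge, to an abstraction node $l$ (its binder). A trace is a finite sequence of directions from $\{\swarrow,\downarrow,\searrow\}$; $\epsilon$ is the empty trace and $d\cdot\tau$ is the trace $\tau$ extended by one final step $d$. Paths $n\xrightarrow{\tau}m$ are defined inductively: $n\xrightarrow{\epsilon}n$; if $n\xrightarrow{\tau}\lambda(m)$ then $n\xrightarrow{\downarrow\cdot\tau}m$; if $n\xrightarrow{\tau}@(m_1,m_2)$ then $n\xrightarrow{\swarrow\cdot\tau}m_1$ and $n\xrightarrow{\searrow\cdot\tau}m_2$ (binding edges are never followed). The path $n\xrightarrow{\tau}$ crosses a node $m$ if either $n\xrightarrow{\tau}m$, or $\tau=d\cdot\tau'$ and $n\xrightarrow{\tau'}$ crosses $m$. A root is a node $r$ such that the only path ending in $r$ has the empty trace. A node $m$ dominates $n$ if every path from a root to $n$ crosses $m$. A $\lambda$-graph is a pre-$\lambda$-graph that has finitely many nodes, is acyclic ($n\xrightarrow{\tau}n$ holds only for $\tau=\epsilon$), and is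 dominated (every bound variable node $\mathrm{var}(l)$ is dominated by its binder $l$). Two nodes are homogeneous if both are application nodes, or both abstraction nodes, or both free variable nodes, or both bound variable nodes; a binary relation $R$ on nodes is homogeneous if it only relates homogeneous nodes. Rules: $(\swarrow)$: $@(n_1,n_2)\,R\,@(m_1,m_2)$ implies $n_1\,R\,m_1$; $(\searrow)$: $@(n_1,n_2)\,R\,@(m_1,m_2)$ implies $n_2\,R\,m_2$; $(\downarrow)$: $\lambda(n)\,R\,\lambda(m)$ implies $n\,R\,m$; $(\circlearrowright)$: $\mathrm{var}(n)\,R\,\mathrm{var}(m)$ implies $n\,R\,m$. $R$ is propagated if closed under $(\swarrow),(\downarrow),(\searrow)$. A bisimulation is a homogeneous propagated relation closed also under $(\circlearrowright)$. $R^{\Downarrow}$ (propagation) is the smallest propagated relation containing $R$. A query over $G$ is a binary relation on the roots of $G$. *)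

theory Defs
  imports Main
begin

datatype ('n, 'a) node =
    App 'n 'n
  | Abs 'n
  | FVar 'a
  | BVar 'n        (* bound variable node with binding edge to its binder *)

type_synonym ('n, 'a) graph = "'n set \<times> ('n \<Rightarrow> ('n, 'a) node)"

definition nodes :: "('n, 'a) graph \<Rightarrow> 'n set" where
  "nodes G = fst G"

definition lab :: "('n, 'a) graph \<Rightarrow> 'n \<Rightarrow> ('n, 'a) node" where
  "lab G = snd G"

definition is_abs :: "('n, 'a) graph \<Rightarrow> 'n \<Rightarrow> bool" where
  "is_abs G l \<longleftrightarrow> (\<exists>b. lab G l = Abs b)"

definition pre_lambda_graph :: "('n, 'a) graph \<Rightarrow> bool" where
  "pre_lambda_graph G \<longleftrightarrow>
     (\<forall>n\<in>nodes G. case lab G n of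
        App n1 n2 \<Rightarrow> n1 \<in> nodes G \<and> n2 \<in> nodes G
      | Abs b \<Rightarrow> b \<in> nodes G
      | FVar _ \<Rightarrow> True
      | BVar l \<Rightarrow> l \<in> nodes G \<and> is_abs G l) \<and>
     (\<forall>n\<in>nodes G. \<forall>m\<in>nodes G. \<forall>x. lab G n = FVar x \<and> lab G m = FVar x \<longrightarrow> n = m)"

datatype dir = SW | Down | SE

text \<open>Traces are lists of directions; the head of the list is the LAST step,
so \<open>d # \<tau>\<close> is the trace \<open>\<tau>\<close> extended by a final step \<open>d\<close>.\<close>

inductive path :: "('n, 'a) graph \<Rightarrow> 'n \<Rightarrow> dir list \<Rightarrow> 'n \<Rightarrow> bool" for G where
  path_nil: "n \<in> nodes G \<Longrightarrow> path G n [] n"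
| path_down: "path G n \<tau> m \<Longrightarrow> lab G m = Abs m' \<Longrightarrow> path G n (Down # \<tau>) m'"
| path_sw: "path G n \<tau> m \<Longrightarrow> lab G m = App m1 m2 \<Longrightarrow> path G n (SW # \<tau>) m1"
| path_se: "path G n \<tau> m \<Longrightarrow> lab G m = App m1 m2 \<Longrightarrow> path G n (SE # \<tau>) m2"

inductive crosses :: "('n, 'a) graph \<Rightarrow> 'n \<Rightarrow> dir list \<Rightarrow> 'n \<Rightarrow> bool" for G where
  crosses_here: "path G n \<tau> m \<Longrightarrow> crosses G n \<tau> m"
| crosses_prefix: "crosses G n \<tau> m \<Longrightarrow> crosses G n (d # \<tau>) m"

definition is_root :: "('n, 'a) graph \<Rightarrow> 'n \<Rightarrow> bool" where
  "is_root G r \<longleftrightarrow> r \<in> nodes G \<and> (\<forall>n \<tau>. path G n \<tau> r \<longrightarrow> \<tau> = [])"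

definition dominates :: "('n, 'a) graph \<Rightarrow> 'n \<Rightarrow> 'n \<Rightarrow> bool" where
  "dominates G m n \<longleftrightarrow> (\<forall>r \<tau>. is_root G r \<longrightarrow> path G r \<tau> n \<longrightarrow> crosses G r \<tau> m)"

definition lambda_graph :: "('n, 'a) graph \<Rightarrow> bool" where
  "lambda_graph G \<longleftrightarrow> pre_lambda_graph G \<and> finite (nodes G) \<and>
     (\<forall>n \<tau>. path G n \<tau> n \<longrightarrow> \<tau> = []) \<and>
     (\<forall>n\<in>nodes G. \<forall>l. lab G n = BVar l \<longrightarrow> dominates G l n)"

definition homogeneous_nodes :: "('n, 'a) graph \<Rightarrow> 'n \<Rightarrow> 'n \<Rightarrow> bool" where
  "homogeneous_nodes G n m \<longleftrightarrow>
     (case (lab G n, lab G m) of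
        (App _ _, App _ _) \<Rightarrow> True
      | (Abs _, Abs _) \<Rightarrow> True
      | (FVar _, FVar _) \<Rightarrow> True
      | (BVar _, BVar _) \<Rightarrow> True
      | _ \<Rightarrow> False)"

definition homogeneous :: "('n, 'a) graph \<Rightarrow> 'n rel \<Rightarrow> bool" where
  "homogeneous G R \<longleftrightarrow> (\<forall>(n, m)\<in>R. homogeneous_nodes G n m)"

definition propagated :: "('n, 'a) graph \<Rightarrow> 'n rel \<Rightarrow> bool" where
  "propagated G R \<longleftrightarrow>
     (\<forall>n m n1 n2 m1 m2. (n, m) \<in> R \<longrightarrow> lab G n = App n1 n2 \<longrightarrow> lab G m = App m1 m2 \<longrightarrow>
         (n1, m1) \<in> R \<and> (n2, m2) \<in> R) \<and>
     (\<forall>n m n' m'. (n, m) \<in> R \<longrightarrow> lab G n = Abs n' \<longrightarrow> lab G m = Abs m' \<longrightarrow> (n', m') \<in> R)"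

definition bisimulation :: "('n, 'a) graph \<Rightarrow> 'n rel \<Rightarrow> bool" where
  "bisimulation G R \<longleftrightarrow> homogeneous G R \<and> propagated G R \<and>
     (\<forall>n m l l'. (n, m) \<in> R \<longrightarrow> lab G n = BVar l \<longrightarrow> lab G m = BVar l' \<longrightarrow> (l, l') \<in> R)"

inductive_set propagation :: "('n, 'a) graph \<Rightarrow> 'n rel \<Rightarrow> 'n rel" for G R where
  prop_base: "(n, m) \<in> R \<Longrightarrow> (n, m) \<in> propagation G R"
| prop_sw: "(n, m) \<in> propagation G R \<Longrightarrow> lab G n = App n1 n2 \<Longrightarrow> lab G m = App m1 m2 \<Longrightarrow>
     (n1, m1) \<in> propagation G R"
| prop_se: "(n, m) \<in> propagation G R \<Longrightarrow> lab G n = App n1 n2 \<Longrightarrow> lab G m = App m1 m2 \<Longrightarrow>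
     (n2, m2) \<in> propagation G R"
| prop_down: "(n, m) \<in> propagation G R \<Longrightarrow> lab G n = Abs n' \<Longrightarrow> lab G m = Abs m' \<Longrightarrow>
     (n', m') \<in> propagation G R"

definition is_query :: "('n, 'a) graph \<Rightarrow> 'n rel \<Rightarrow> bool" where
  "is_query G Q \<longleftrightarrow> Q \<subseteq> {r. is_root G r} \<times> {r. is_root G r}"

end

theory Submission
  imports Defs
begin

lemma path_nodes:
  assumes "pre_lambda_graph G" "path G r \<tau> n" shows "n \<in> nodes G"
  using assms(2)
proof induction
  case (path_nil n) then show ?case by simp
next
  case (path_down n \<tau> m m')
  from assms(1) path_down(3) have "case lab G m of
        App n1 n2 \<Rightarrow> n1 \<in> nodes G \<and> n2 \<in> nodes G
      | Abs b \<Rightarrow> b \<in> nodes G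
      | FVar _ \<Rightarrow> True
      | BVar l \<Rightarrow> l \<in> nodes G \<and> is_abs G l" unfolding pre_lambda_graph_def by blast
  then show ?case using path_down(2) by simp
next
  case (path_sw n \<tau> m m1 m2)
  from assms(1) path_sw(3) have "case lab G m of
        App n1 n2 \<Rightarrow> n1 \<in> nodes G \<and> n2 \<in> nodes G
      | Abs b \<Rightarrow> b \<in> nodes G
      | FVar _ \<Rightarrow> True
      | BVar l \<Rightarrow> l \<in> nodes G \<and> is_abs G l" unfolding pre_lambda_graph_def by blast
  then show ?case using path_sw(2) by simp
next
  case (path_se n \<tau> m m1 m2)
  from assms(1) path_se(3) have "case lab G m of
        App n1 n2 \<Rightarrow> n1 \<in> nodes G \<and> n2 \<in> nodes G
      | Abs b \<Rightarrow> b \<in> nodes G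
      | FVar _ \<Rightarrow> True
      | BVar l \<Rightarrow> l \<in> nodes G \<and> is_abs G l" unfolding pre_lambda_graph_def by blast
  then show ?case using path_se(2) by simp
qed

lemma path_nil_eq: "path G r [] n \<Longrightarrow> n = r"
  by (cases rule: path.cases) auto

lemma path_det: "path G r \<tau> x \<Longrightarrow> path G r \<tau> y \<Longrightarrow> x = y"
proof (induction arbitrary: y rule: path.induct)
  case (path_nil n) then show ?case using path_nil_eq by metis
next
  case (path_down n \<tau> m m')
  from path_down.prems show ?case
    by (cases rule: path.cases) (use path_down in auto)
next
  case (path_sw n \<tau> m m1 m2)
  from path_sw.prems show ?case
    by (cases rule: path.cases) (use path_sw in auto)
next
  case (path_se n \<tau> m m1 m2)
  from path_se.prems show ?case
    by (cases rule: path.cases) (use path_se in auto)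
qed

lemma path_concat: "path G w \<rho> n \<Longrightarrow> path G r \<tau> w \<Longrightarrow> path G r (\<rho> @ \<tau>) n"
proof (induction rule: path.induct)
  case (path_nil n) then show ?case by simp
next
  case (path_down n \<tau> m m') then show ?case by (auto intro: path.intros)
next
  case (path_sw n \<tau> m m1 m2) then show ?case by (auto intro: path.intros)
next
  case (path_se n \<tau> m m1 m2) then show ?case by (auto intro: path.intros)
qed

lemma path_split:
  assumes "pre_lambda_graph G"
  shows "path G r \<sigma> n \<Longrightarrow> \<sigma> = \<rho> @ \<tau> \<Longrightarrow> \<exists>w. path G r \<tau> w \<and> path G w \<rho> n"
proof (induction arbitrary: \<rho> rule: path.induct)
  case (path_nil n) then show ?case by (auto intro: path.intros)
next
  case (path_down n \<sigma> m m')
  show ?case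
  proof (cases \<rho>)
    case Nil
    then have "path G n \<tau> m'" using path_down by (auto intro: path.intros)
    moreover have "m' \<in> nodes G" using path_nodes[OF assms] calculation by blast
    ultimately show ?thesis using Nil by (auto intro: path.intros)
  next
    case (Cons d \<rho>0)
    then have "\<sigma> = \<rho>0 @ \<tau>" "d = Down" using path_down by auto
    then obtain w where "path G n \<tau> w" "path G w \<rho>0 m" using path_down by blast
    then show ?thesis using Cons \<open>d = Down\<close> path_down(2) by (auto intro: path.intros)
  qed
next
  case (path_sw n \<sigma> m m1 m2)
  show ?case
  proof (cases \<rho>)
    case Nil
    then have "path G n \<tau> m1" using path_sw by (auto intro: path.intros)
    moreover have "m1 \<in> nodes G" using path_nodes[OF assms] calculation by blast
    ultimately show ?thesis using Nil by (auto intro: path.intros)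
  next
    case (Cons d \<rho>0)
    then have "\<sigma> = \<rho>0 @ \<tau>" "d = SW" using path_sw by auto
    then obtain w where "path G n \<tau> w" "path G w \<rho>0 m" using path_sw by blast
    then show ?thesis using Cons \<open>d = SW\<close> path_sw(2) by (auto intro: path.intros)
  qed
next
  case (path_se n \<sigma> m m1 m2)
  show ?case
  proof (cases \<rho>)
    case Nil
    then have "path G n \<tau> m2" using path_se by (auto intro: path.intros)
    moreover have "m2 \<in> nodes G" using path_nodes[OF assms] calculation by blast
    ultimately show ?thesis using Nil by (auto intro: path.intros)
  next
    case (Cons d \<rho>0)
    then have "\<sigma> = \<rho>0 @ \<tau>" "d = SE" using path_se by auto
    then obtain w where "path G n \<tau> w" "path G w \<rho>0 m" using path_se by blast
    then show ?thesis using Cons \<open>d = SE\<close> path_se(2) by (auto intro: path.intros)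
  qed
qed

lemma path_bvar: "path G z \<tau> y \<Longrightarrow> lab G z = BVar l \<Longrightarrow> \<tau> = []"
proof (induction rule: path.induct)
  case (path_nil n) then show ?case by simp
next
  case (path_down n \<tau> m m')
  then have "\<tau> = []" by simp
  then have "m = n" using path_down path_nil_eq by metis
  then show ?case using path_down by simp
next
  case (path_sw n \<tau> m m1 m2)
  then have "\<tau> = []" by simp
  then have "m = n" using path_sw path_nil_eq by metis
  then show ?case using path_sw by simp
next
  case (path_se n \<tau> m m1 m2)
  then have "\<tau> = []" by simp
  then have "m = n" using path_se path_nil_eq by metis
  then show ?case using path_se by simp
qed

lemma crosses_split: "crosses G r \<tau> l \<Longrightarrow> \<exists>\<rho> \<tau>'. \<tau> = \<rho> @ \<tau>' \<and> path G r \<tau>' l"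
proof (induction rule: crosses.induct)
  case (crosses_here n \<tau> m) then show ?case by (metis append_Nil)
next
  case (crosses_prefix n \<tau> m d) then show ?case by (metis append_Cons)
qed

lemma hom_cases:
  assumes "homogeneous G R" "(a, b) \<in> R"
  shows "(\<exists>x y. lab G a = App x y) \<longleftrightarrow> (\<exists>x y. lab G b = App x y)"
    "(\<exists>x. lab G a = Abs x) \<longleftrightarrow> (\<exists>x. lab G b = Abs x)"
    "(\<exists>x. lab G a = BVar x) \<longleftrightarrow> (\<exists>x. lab G b = BVar x)"
proof -
  have h: "homogeneous_nodes G a b" using assms unfolding homogeneous_def by blast
  show "(\<exists>x y. lab G a = App x y) \<longleftrightarrow> (\<exists>x y. lab G b = App x y)"
    using h unfolding homogeneous_nodes_def by (cases "lab G a"; cases "lab G b") simp_all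
  show "(\<exists>x. lab G a = Abs x) \<longleftrightarrow> (\<exists>x. lab G b = Abs x)"
    using h unfolding homogeneous_nodes_def by (cases "lab G a"; cases "lab G b") simp_all
  show "(\<exists>x. lab G a = BVar x) \<longleftrightarrow> (\<exists>x. lab G b = BVar x)"
    using h unfolding homogeneous_nodes_def by (cases "lab G a"; cases "lab G b") simp_all
qed

lemma follow_right:
  assumes "homogeneous G B" "propagated G B" "B \<subseteq> nodes G \<times> nodes G"
  shows "path G b \<rho> b' \<Longrightarrow> (a, b) \<in> B \<Longrightarrow> \<exists>a'. path G a \<rho> a' \<and> (a', b') \<in> B"
proof (induction rule: path.induct)
  case (path_nil n) then show ?case using assms(3) by (auto intro: path.intros)
next
  case (path_down n \<tau> m m')
  then obtain a'' where h: "path G a \<tau> a''" "(a'', m) \<in> B" by blast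
  then obtain c where c: "lab G a'' = Abs c" using hom_cases(2)[OF assms(1) h(2)] path_down by blast
  then have "(c, m') \<in> B" using assms(2) h path_down unfolding propagated_def by blast
  then show ?case using h c by (auto intro: path.intros)
next
  case (path_sw n \<tau> m m1 m2)
  then obtain a'' where h: "path G a \<tau> a''" "(a'', m) \<in> B" by blast
  then obtain c d where c: "lab G a'' = App c d" using hom_cases(1)[OF assms(1) h(2)] path_sw by blast
  then have "(c, m1) \<in> B" using assms(2) h path_sw unfolding propagated_def by blast
  then show ?case using h c by (auto intro: path.intros)
next
  case (path_se n \<tau> m m1 m2)
  then obtain a'' where h: "path G a \<tau> a''" "(a'', m) \<in> B" by blast
  then obtain c d where c: "lab G a'' = App c d" using hom_cases(1)[OF assms(1) h(2)] path_se by blast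
  then have "(d, m2) \<in> B" using assms(2) h path_se unfolding propagated_def by blast
  then show ?case using h c by (auto intro: path.intros)
qed

lemma follow_left:
  assumes "homogeneous G B" "propagated G B" "B \<subseteq> nodes G \<times> nodes G"
  shows "path G a \<rho> a' \<Longrightarrow> (a, b) \<in> B \<Longrightarrow> \<exists>b'. path G b \<rho> b' \<and> (a', b') \<in> B"
proof (induction rule: path.induct)
  case (path_nil n) then show ?case using assms(3) by (auto intro: path.intros)
next
  case (path_down n \<tau> m m')
  then obtain a'' where h: "path G b \<tau> a''" "(m, a'') \<in> B" by blast
  then obtain c where c: "lab G a'' = Abs c" using hom_cases(2)[OF assms(1) h(2)] path_down by blast
  then have "(m', c) \<in> B" using assms(2) h path_down unfolding propagated_def by blast
  then show ?case using h c by (auto intro: path.intros)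
next
  case (path_sw n \<tau> m m1 m2)
  then obtain a'' where h: "path G b \<tau> a''" "(m, a'') \<in> B" by blast
  then obtain c d where c: "lab G a'' = App c d" using hom_cases(1)[OF assms(1) h(2)] path_sw by blast
  then have "(m1, c) \<in> B" using assms(2) h path_sw unfolding propagated_def by blast
  then show ?case using h c by (auto intro: path.intros)
next
  case (path_se n \<tau> m m1 m2)
  then obtain a'' where h: "path G b \<tau> a''" "(m, a'') \<in> B" by blast
  then obtain c d where c: "lab G a'' = App c d" using hom_cases(1)[OF assms(1) h(2)] path_se by blast
  then have "(m2, d) \<in> B" using assms(2) h path_se unfolding propagated_def by blast
  then show ?case using h c by (auto intro: path.intros)
qed

lemma prop_sub_aux:
  assumes "propagated G B" "Q \<subseteq> B"
  shows "(x, y) \<in> propagation G Q \<Longrightarrow> (x, y) \<in> B"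
proof (induction rule: propagation.induct)
  case (prop_base n m) then show ?case using assms(2) by blast
next
  case (prop_sw n m n1 n2 m1 m2)
  then show ?case using assms(1) unfolding propagated_def by blast
next
  case (prop_se n m n1 n2 m1 m2)
  then show ?case using assms(1) unfolding propagated_def by blast
next
  case (prop_down n m n' m')
  then show ?case using assms(1) unfolding propagated_def by blast
qed

lemma prop_sub: "propagated G B \<Longrightarrow> Q \<subseteq> B \<Longrightarrow> propagation G Q \<subseteq> B"
proof (intro subrelI)
  fix x y assume "propagated G B" "Q \<subseteq> B" "(x, y) \<in> propagation G Q"
  then show "(x, y) \<in> B" using prop_sub_aux by metis
qed

lemma prop_traces:
  assumes "is_query G Q"
  shows "(n, m) \<in> propagation G Q \<Longrightarrow> \<exists>r s \<tau>. (r, s) \<in> Q \<and> path G r \<tau> n \<and> path G s \<tau> m"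
proof (induction rule: propagation.induct)
  case (prop_base n m)
  then have "n \<in> nodes G" "m \<in> nodes G" using assms unfolding is_query_def is_root_def by auto
  then show ?case using prop_base by (meson path_nil)
next
  case (prop_sw n m n1 n2 m1 m2) then show ?case by (meson path.intros)
next
  case (prop_se n m n1 n2 m1 m2) then show ?case by (meson path.intros)
next
  case (prop_down n m n' m') then show ?case by (meson path.intros)
qed

lemma traces_prop_aux:
  "path G r \<tau> a \<Longrightarrow> (r, s) \<in> Q \<Longrightarrow> path G s \<tau> b \<Longrightarrow> (a, b) \<in> propagation G Q"
proof (induction arbitrary: b rule: path.induct)
  case (path_nil n)
  then have "b = s" using path_nil_eq by metis
  then show ?case using path_nil by (simp add: propagation.prop_base)
next
  case (path_down n \<tau> m m')
  from path_down.prems(2) obtain m0 where "path G s \<tau> m0" "lab G m0 = Abs b"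
    by (cases rule: path.cases) auto
  then show ?case using path_down propagation.prop_down by metis
next
  case (path_sw n \<tau> m m1 m2)
  from path_sw.prems(2) obtain m0 x where "path G s \<tau> m0" "lab G m0 = App b x"
    by (cases rule: path.cases) auto
  then show ?case using path_sw propagation.prop_sw by metis
next
  case (path_se n \<tau> m m1 m2)
  from path_se.prems(2) obtain m0 x where "path G s \<tau> m0" "lab G m0 = App x b"
    by (cases rule: path.cases) auto
  then show ?case using path_se propagation.prop_se by metis
qed

lemma traces_prop:
  assumes "(r, s) \<in> Q"
  shows "path G r \<tau> a \<Longrightarrow> path G s \<tau> b \<Longrightarrow> (a, b) \<in> propagation G Q"
  using traces_prop_aux assms by metis

lemma path_start: "path G r \<tau> n \<Longrightarrow> r \<in> nodes G"
  by (induction rule: path.induct) auto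

definition traces :: "('n, 'a) graph \<Rightarrow> 'n \<Rightarrow> dir list set" where
  "traces G w = {\<sigma>. \<exists>c. path G w \<sigma> c}"

lemma traces_eq:
  assumes "homogeneous G B" "propagated G B" "B \<subseteq> nodes G \<times> nodes G" "(a, b) \<in> B"
  shows "traces G a = traces G b"
proof
  show "traces G a \<subseteq> traces G b"
  proof
    fix \<sigma> assume "\<sigma> \<in> traces G a"
    then obtain c where "path G a \<sigma> c" unfolding traces_def by blast
    then obtain c' where "path G b \<sigma> c'" using follow_left[OF assms(1-3) _ assms(4)] by metis
    then show "\<sigma> \<in> traces G b" unfolding traces_def by blast
  qed
  show "traces G b \<subseteq> traces G a"
  proof
    fix \<sigma> assume "\<sigma> \<in> traces G b"
    then obtain c where "path G b \<sigma> c" unfolding traces_def by blast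
    then obtain c' where "path G a \<sigma> c'" using follow_right[OF assms(1-3) _ assms(4)] by metis
    then show "\<sigma> \<in> traces G a" unfolding traces_def by blast
  qed
qed

lemma E_trancl:
  assumes "(c, w) \<in> {(c, w). \<exists>d. path G w [d] c}\<^sup>+"
  shows "\<exists>\<sigma>. \<sigma> \<noteq> [] \<and> path G w \<sigma> c"
  using assms
proof (induction rule: trancl_induct)
  case (base y)
  then obtain d where "path G y [d] c" by blast
  then show ?case by blast
next
  case (step y z)
  obtain \<sigma> where s: "\<sigma> \<noteq> []" "path G y \<sigma> c" using step.IH by blast
  obtain d where d: "path G z [d] y" using step.hyps(2) by blast
  have "path G z (\<sigma> @ [d]) c" using path_concat[OF s(2) d] .
  then show ?case by blast
qed

lemma finite_traces:
  assumes "lambda_graph G"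
  shows "finite (length ` traces G w)"
proof -
  have pl: "pre_lambda_graph G" using assms unfolding lambda_graph_def by blast
  define E where "E = {(c, w). \<exists>d. path G w [d] c}"
  have "E \<subseteq> nodes G \<times> nodes G"
  proof (intro subrelI)
    fix c w assume "(c, w) \<in> E"
    then obtain d where "path G w [d] c" unfolding E_def by blast
    then have "w \<in> nodes G" "c \<in> nodes G" using path_nodes[OF pl] path_start by fast+
    then show "(c, w) \<in> nodes G \<times> nodes G" by simp
  qed
  moreover have "finite (nodes G)" using assms unfolding lambda_graph_def by blast
  then have "finite (nodes G \<times> nodes G)" by (intro finite_SigmaI)
  ultimately have fE: "finite E" using finite_subset by blast
  have "acyclic E" unfolding acyclic_def
  proof
    fix x show "(x, x) \<notin> E\<^sup>+"
    proof
      assume "(x, x) \<in> E\<^sup>+"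
      then have "(x, x) \<in> {(c, w). \<exists>d. path G w [d] c}\<^sup>+" unfolding E_def .
      from E_trancl[OF this] obtain \<sigma> where "\<sigma> \<noteq> []" "path G x \<sigma> x" by blast
      moreover have "\<forall>n \<tau>. path G n \<tau> n \<longrightarrow> \<tau> = []" using assms unfolding lambda_graph_def by blast
      ultimately show False by blast
    qed
  qed
  then have "wf E" using fE finite_acyclic_wf by blast
  then show ?thesis
  proof (induction w rule: wf_induct_rule)
    case (less w)
    have "{w'. (w', w) \<in> E} \<subseteq> fst ` E" by force
    then have fc: "finite {w'. (w', w) \<in> E}" using fE finite_subset finite_imageI by blast
    have "length ` traces G w \<subseteq> insert 0 (Suc ` (\<Union>w'\<in>{w'. (w', w) \<in> E}. length ` traces G w'))"
    proof
      fix k assume "k \<in> length ` traces G w"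
      then obtain \<sigma> c where k: "k = length \<sigma>" "path G w \<sigma> c" unfolding traces_def by blast
      show "k \<in> insert 0 (Suc ` (\<Union>w'\<in>{w'. (w', w) \<in> E}. length ` traces G w'))"
      proof (cases \<sigma> rule: rev_exhaust)
        case Nil then show ?thesis using k by simp
      next
        case (snoc ys y)
        then obtain w' where "path G w [y] w'" "path G w' ys c"
          using path_split[OF pl k(2), of ys "[y]"] snoc by auto
        then have "(w', w) \<in> E" "ys \<in> traces G w'" unfolding E_def traces_def by blast+
        then have "length ys \<in> (\<Union>w'\<in>{w'. (w', w) \<in> E}. length ` traces G w')" by blast
        then show ?thesis using k snoc by simp
      qed
    qed
    moreover have "finite (insert 0 (Suc ` (\<Union>w'\<in>{w'. (w', w) \<in> E}. length ` traces G w')))"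
      by (simp add: fc less)
    ultimately show ?case using finite_subset by blast
  qed
qed

lemma no_loop:
  assumes "lambda_graph G" "traces G x = traces G z" "path G x us z" "us \<noteq> []"
  shows False
proof -
  have pl: "pre_lambda_graph G" using assms unfolding lambda_graph_def by blast
  obtain N where N: "\<forall>k\<in>length ` traces G z. k \<le> N"
    using finite_traces[OF assms(1)] finite_nat_set_iff_bounded_le by blast
  have "\<exists>\<sigma>\<in>traces G z. length \<sigma> \<ge> k" for k
  proof (induction k)
    case 0
    have "z \<in> nodes G" using path_nodes[OF pl assms(3)] .
    then have "[] \<in> traces G z" unfolding traces_def by (blast intro: path.intros)
    then show ?case by blast
  next
    case (Suc k)
    then obtain \<sigma> c where s: "length \<sigma> \<ge> k" "path G z \<sigma> c" unfolding traces_def by blast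
    have "path G x (\<sigma> @ us) c" using path_concat[OF s(2) assms(3)] .
    then have "\<sigma> @ us \<in> traces G z" using assms(2) unfolding traces_def by blast
    moreover have "length (\<sigma> @ us) \<ge> Suc k" using s assms(4) by (cases us) auto
    ultimately show ?case by blast
  qed
  then obtain \<sigma> where "\<sigma> \<in> traces G z" "length \<sigma> \<ge> Suc N" by blast
  then show False using N by force
qed

theorem mainTheorem9:
  fixes G :: "('n, 'a) graph" and B Q :: "'n rel"
  assumes "lambda_graph G"
    and "B \<subseteq> nodes G \<times> nodes G"
    and "bisimulation G B"
    and "is_query G Q"
    and "Q \<subseteq> B"
  shows "bisimulation G (propagation G Q)"
proof -
  have pl: "pre_lambda_graph G" using assms(1) unfolding lambda_graph_def by blast
  have hB: "homogeneous G B" and pB: "propagated G B"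
    and vB: "\<And>n m l l'. (n, m) \<in> B \<Longrightarrow> lab G n = BVar l \<Longrightarrow> lab G m = BVar l' \<Longrightarrow> (l, l') \<in> B"
    using assms(3) unfolding bisimulation_def by blast+
  have sub: "propagation G Q \<subseteq> B" using prop_sub[OF pB assms(5)] .
  have hom: "homogeneous G (propagation G Q)"
    unfolding homogeneous_def
  proof (intro ballI, clarify)
    fix a b assume "(a, b) \<in> propagation G Q"
    then have "(a, b) \<in> B" using sub by blast
    then show "homogeneous_nodes G a b" using hB unfolding homogeneous_def by blast
  qed
  have propQ: "propagated G (propagation G Q)"
    unfolding propagated_def
  proof (intro conjI allI impI)
    fix n m n1 n2 m1 m2 assume "(n, m) \<in> propagation G Q" "lab G n = App n1 n2" "lab G m = App m1 m2"
    then show "(n1, m1) \<in> propagation G Q" "(n2, m2) \<in> propagation G Q"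
      by (metis propagation.prop_sw, metis propagation.prop_se)
  next
    fix n m n' m' assume "(n, m) \<in> propagation G Q" "lab G n = Abs n'" "lab G m = Abs m'"
    then show "(n', m') \<in> propagation G Q" by (metis propagation.prop_down)
  qed
  have var: "(l, l') \<in> propagation G Q"
    if nm: "(n, m) \<in> propagation G Q" "lab G n = BVar l" "lab G m = BVar l'" for n m l l'
  proof -
    obtain r s \<tau> where rs: "(r, s) \<in> Q" "path G r \<tau> n" "path G s \<tau> m"
      using prop_traces[OF assms(4) nm(1)] by blast
    have roots: "is_root G r" "is_root G s" using rs(1) assms(4) unfolding is_query_def by auto
    have nN: "n \<in> nodes G" "m \<in> nodes G" using path_nodes[OF pl] rs by blast+
    have dom: "\<forall>n\<in>nodes G. \<forall>l. lab G n = BVar l \<longrightarrow> dominates G l n"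
      using assms(1) unfolding lambda_graph_def by blast
    have "dominates G l n" using dom nm(2) nN(1) by blast
    then have c1: "crosses G r \<tau> l" using roots(1) rs(2) unfolding dominates_def by blast
    have "dominates G l' m" using dom nm(3) nN(2) by blast
    then have c2: "crosses G s \<tau> l'" using roots(2) rs(3) unfolding dominates_def by blast
    obtain \<rho> \<tau>1 where t1: "\<tau> = \<rho> @ \<tau>1" "path G r \<tau>1 l" using crosses_split[OF c1] by blast
    obtain \<rho>' \<tau>2 where t2: "\<tau> = \<rho>' @ \<tau>2" "path G s \<tau>2 l'" using crosses_split[OF c2] by blast
    note t = t1 t2
    have ll: "(l, l') \<in> B" using vB nm sub by blast
    from t(1,3) have "\<rho> @ \<tau>1 = \<rho>' @ \<tau>2" by simp
    then have "\<exists>us. \<rho> = \<rho>' @ us \<and> us @ \<tau>1 = \<tau>2 \<or> \<rho> @ us = \<rho>' \<and> \<tau>1 = us @ \<tau>2"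
      using append_eq_append_conv2[THEN iffD1] by blast
    then obtain us where us: "\<rho> = \<rho>' @ us \<and> us @ \<tau>1 = \<tau>2 \<or> \<rho> @ us = \<rho>' \<and> \<tau>1 = us @ \<tau>2" by blast
    show ?thesis
    proof (cases "us = []")
      case True
      then have "\<tau>1 = \<tau>2" using us by auto
      then have "path G s \<tau>1 l'" using t(4) by simp
      then show ?thesis using traces_prop[OF rs(1) t(2)] by blast
    next
      case False
      show ?thesis
      proof (cases "\<rho> = \<rho>' @ us \<and> us @ \<tau>1 = \<tau>2")
        case True
        then have "\<tau>2 = us @ \<tau>1" by simp
        from path_split[OF pl t(4) this] obtain x where x: "path G s \<tau>1 x" "path G x us l'"
          by blast
        have "(l, x) \<in> B" using traces_prop[OF rs(1) t(2) x(1)] sub by blast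
        then have "traces G l = traces G x" using traces_eq[OF hB pB assms(2)] by metis
        moreover have "traces G l = traces G l'" using traces_eq[OF hB pB assms(2) ll] .
        ultimately have "traces G x = traces G l'" by simp
        from no_loop[OF assms(1) this x(2) \<open>us \<noteq> []\<close>] show ?thesis ..
      next
        case False
        then have U: "\<tau>1 = us @ \<tau>2" using us by blast
        from path_split[OF pl t(2) U] obtain y where y: "path G r \<tau>2 y" "path G y us l"
          by blast
        have "(y, l') \<in> B" using traces_prop[OF rs(1) y(1) t(4)] sub by blast
        then have "traces G y = traces G l'" using traces_eq[OF hB pB assms(2)] by metis
        moreover have "traces G l = traces G l'" using traces_eq[OF hB pB assms(2) ll] .
        ultimately have "traces G y = traces G l" by simp
        from no_loop[OF assms(1) this y(2) \<open>us \<noteq> []\<close>] show ?thesis ..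
      qed
    qed
  qed
  show ?thesis unfolding bisimulation_def using hom propQ var by blast
qed

end
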